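(* Let $G=(V,E)$ be a block graph with $n=|V|\ge 2$ vertices, consisting of $r$ blocks whose numbers of vertices are $P_1,\dots,P_r$, and set $$\lambda_G=\sum_{i=1}^r \frac{P_i-1}{P_i}.$$ For a vertex $x\in V$ contained in exactly $s$ blocks, labeled $i_1,\dots,i_s$, set $$\beta_x=\Big(\sum_{j=1}^s \frac{1}{P_{i_j}}\Big)-(s-1).$$ Then the equation $DK=n\mathbf{1}_n$ has a unique solution $K$, and hence the Steinerberger curvature of every vertex $x\in V$ is $$K(x)=\frac{|V|\,\beta_x}{\lambda_G}.$$
   Context: All graphs are finite, simple, connected and undirected, with the combinatorial shortest-path distance $d$. For $G=(V,E)$ with $V=\{v_1,\dots,v_n\}$, let $D=(d(v_i,v_j))_{i,j=1}^n$ be its distance matrix and $\mathbf{1}_n\in\mathbb{R}^n$ the all-ones column vector. The Steinerberger curvature $K\in\mathbb{R}^n$ (written $K_i$ or $K(v_i)$) is defined as follows: if $DK=n\mathbf{1}_n$ has a unique solution, $K$ is that solution; if it has several solutions, $K$ is a solution for which $\min_i K_i$ is maximal; if it has no solution, $K=nD^\dagger\mathbf{1}_n$ with $D^\dagger$ the Moore–Penrose pseudoinverse. A block of a graph is a maximal connected subgraph without a cut vertex (maximal 2-connected subgraph; in particular a bridge together with its endpoints is a block). A block graph is a connected graph all of whose blocks are complete graphs (cliques). *)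

theory Defs
  imports "HOL-Analysis.Analysis" "HOL-Library.FuncSet"
begin

definition simple_graph :: "'a set \<Rightarrow> ('a \<Rightarrow> 'a \<Rightarrow> bool) \<Rightarrow> bool" where
  "simple_graph V E \<longleftrightarrow> finite V \<and> (\<forall>u v. E u v \<longrightarrow> E v u) \<and> (\<forall>u. \<not> E u u)
     \<and> (\<forall>u v. E u v \<longrightarrow> u \<in> V \<and> v \<in> V)"

fun walk :: "('a \<Rightarrow> 'a \<Rightarrow> bool) \<Rightarrow> 'a list \<Rightarrow> bool" where
  "walk E [] = False"
| "walk E [x] = True"
| "walk E (x # y # xs) = (E x y \<and> walk E (y # xs))"

definition conn_on :: "('a \<Rightarrow> 'a \<Rightarrow> bool) \<Rightarrow> 'a set \<Rightarrow> bool" where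
  "conn_on E S \<longleftrightarrow> (\<forall>u\<in>S. \<forall>v\<in>S. \<exists>xs. walk E xs \<and> hd xs = u \<and> last xs = v \<and> set xs \<subseteq> S)"

definition connected_graph :: "'a set \<Rightarrow> ('a \<Rightarrow> 'a \<Rightarrow> bool) \<Rightarrow> bool" where
  "connected_graph V E \<longleftrightarrow> simple_graph V E \<and> V \<noteq> {} \<and> conn_on E V"

definition gdist :: "('a \<Rightarrow> 'a \<Rightarrow> bool) \<Rightarrow> 'a \<Rightarrow> 'a \<Rightarrow> nat" where
  "gdist E u v = (LEAST k. \<exists>xs. walk E xs \<and> hd xs = u \<and> last xs = v \<and> length xs = Suc k)"

definition nocut_conn :: "('a \<Rightarrow> 'a \<Rightarrow> bool) \<Rightarrow> 'a set \<Rightarrow> bool" where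
  "nocut_conn E S \<longleftrightarrow> S \<noteq> {} \<and> conn_on E S \<and> (\<forall>x\<in>S. conn_on E (S - {x}))"

(* a block: maximal connected subgraph without a cut vertex (given by its vertex set;
   maximal such subgraphs are induced) *)
definition is_block :: "'a set \<Rightarrow> ('a \<Rightarrow> 'a \<Rightarrow> bool) \<Rightarrow> 'a set \<Rightarrow> bool" where
  "is_block V E B \<longleftrightarrow> B \<subseteq> V \<and> nocut_conn E B \<and>
     (\<forall>C. B \<subseteq> C \<and> C \<subseteq> V \<and> nocut_conn E C \<longrightarrow> C = B)"

definition blocks :: "'a set \<Rightarrow> ('a \<Rightarrow> 'a \<Rightarrow> bool) \<Rightarrow> 'a set set" where
  "blocks V E = {B. is_block V E B}"

definition block_graph :: "'a set \<Rightarrow> ('a \<Rightarrow> 'a \<Rightarrow> bool) \<Rightarrow> bool" where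
  "block_graph V E \<longleftrightarrow> connected_graph V E \<and>
     (\<forall>B \<in> blocks V E. \<forall>u\<in>B. \<forall>v\<in>B. u \<noteq> v \<longrightarrow> E u v)"

definition lambda_G :: "'a set \<Rightarrow> ('a \<Rightarrow> 'a \<Rightarrow> bool) \<Rightarrow> real" where
  "lambda_G V E = (\<Sum>B\<in>blocks V E. (real (card B) - 1) / real (card B))"

definition beta :: "'a set \<Rightarrow> ('a \<Rightarrow> 'a \<Rightarrow> bool) \<Rightarrow> 'a \<Rightarrow> real" where
  "beta V E x = (\<Sum>B\<in>{B\<in>blocks V E. x \<in> B}. 1 / real (card B))
                 - (real (card {B\<in>blocks V E. x \<in> B}) - 1)"

(* Matrices / vectors indexed by the vertex set V (functions, values outside V irrelevant) *)
definition dmat :: "('a \<Rightarrow> 'a \<Rightarrow> bool) \<Rightarrow> 'a \<Rightarrow> 'a \<Rightarrow> real" where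
  "dmat E u v = real (gdist E u v)"

definition mmult :: "'a set \<Rightarrow> ('a \<Rightarrow> 'a \<Rightarrow> real) \<Rightarrow> ('a \<Rightarrow> 'a \<Rightarrow> real) \<Rightarrow> 'a \<Rightarrow> 'a \<Rightarrow> real" where
  "mmult V A B = (\<lambda>u w. \<Sum>v\<in>V. A u v * B v w)"

definition mvec :: "'a set \<Rightarrow> ('a \<Rightarrow> 'a \<Rightarrow> real) \<Rightarrow> ('a \<Rightarrow> real) \<Rightarrow> 'a \<Rightarrow> real" where
  "mvec V A x = (\<lambda>u. \<Sum>v\<in>V. A u v * x v)"

definition meq :: "'a set \<Rightarrow> ('a \<Rightarrow> 'a \<Rightarrow> real) \<Rightarrow> ('a \<Rightarrow> 'a \<Rightarrow> real) \<Rightarrow> bool" where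
  "meq V A B \<longleftrightarrow> (\<forall>u\<in>V. \<forall>v\<in>V. A u v = B u v)"

(* Moore--Penrose pseudoinverse, characterised by the four Penrose equations *)
definition pinv :: "'a set \<Rightarrow> ('a \<Rightarrow> 'a \<Rightarrow> real) \<Rightarrow> 'a \<Rightarrow> 'a \<Rightarrow> real" where
  "pinv V A = (THE M. M \<in> V \<rightarrow>\<^sub>E V \<rightarrow>\<^sub>E UNIV \<and>
      meq V (mmult V (mmult V A M) A) A \<and> meq V (mmult V (mmult V M A) M) M \<and>
      meq V (mmult V A M) (\<lambda>u v. mmult V A M v u) \<and>
      meq V (mmult V M A) (\<lambda>u v. mmult V M A v u))"

definition curv_eq :: "'a set \<Rightarrow> ('a \<Rightarrow> 'a \<Rightarrow> bool) \<Rightarrow> ('a \<Rightarrow> real) \<Rightarrow> bool" where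
  "curv_eq V E K \<longleftrightarrow> (\<forall>u\<in>V. (\<Sum>v\<in>V. dmat E u v * K v) = real (card V))"

definition curv_solutions :: "'a set \<Rightarrow> ('a \<Rightarrow> 'a \<Rightarrow> bool) \<Rightarrow> ('a \<Rightarrow> real) set" where
  "curv_solutions V E = {K \<in> extensional V. curv_eq V E K}"

definition steinerberger_curvature :: "'a set \<Rightarrow> ('a \<Rightarrow> 'a \<Rightarrow> bool) \<Rightarrow> 'a \<Rightarrow> real" where
  "steinerberger_curvature V E =
     (if (\<exists>!K. K \<in> curv_solutions V E) then (THE K. K \<in> curv_solutions V E)
      else if curv_solutions V E \<noteq> {} then
        (SOME K. K \<in> curv_solutions V E \<and>
           (\<forall>K'\<in>curv_solutions V E. Min (K' ` V) \<le> Min (K ` V)))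
      else (\<lambda>u. real (card V) * mvec V (pinv V (dmat E)) (\<lambda>_. 1) u))"

end

theory Submission
  imports Defs
begin



lemma walk_Cons: "walk E (x # xs) \<longleftrightarrow> (xs = [] \<or> (E x (hd xs) \<and> walk E xs))"
  by (cases xs) auto

lemma walk_append:
  "xs \<noteq> [] \<Longrightarrow> ys \<noteq> [] \<Longrightarrow> walk E (xs @ ys) \<longleftrightarrow> walk E xs \<and> walk E ys \<and> E (last xs) (hd ys)"
proof (induction xs)
  case Nil then show ?case by simp
next
  case (Cons x xs)
  show ?case
  proof (cases "xs = []")
    case True then show ?thesis using Cons by (auto simp: walk_Cons)
  next
    case False then show ?thesis using Cons by (auto simp: walk_Cons)
  qed
qed

lemma walk_rev:
  assumes "\<forall>u v. E u v \<longrightarrow> E v u" shows "walk E xs \<Longrightarrow> walk E (rev xs)"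
proof (induction xs)
  case Nil then show ?case by simp
next
  case (Cons x xs)
  show ?case
  proof (cases "xs = []")
    case True then show ?thesis by simp
  next
    case False
    then have "walk E xs" "E x (hd xs)" using Cons.prems by (auto simp: walk_Cons)
    then show ?thesis using False Cons.IH assms by (simp add: walk_append last_rev hd_rev)
  qed
qed

lemma walk_ne: "walk E xs \<Longrightarrow> xs \<noteq> []" by (cases xs) auto

definition rch :: "('a \<Rightarrow> 'a \<Rightarrow> bool) \<Rightarrow> 'a set \<Rightarrow> 'a \<Rightarrow> 'a \<Rightarrow> bool" where
  "rch E S u v \<longleftrightarrow> (\<exists>xs. walk E xs \<and> hd xs = u \<and> last xs = v \<and> set xs \<subseteq> S)"

lemma conn_on_rch: "conn_on E S \<longleftrightarrow> (\<forall>u\<in>S. \<forall>v\<in>S. rch E S u v)"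
  unfolding conn_on_def rch_def by blast

lemma rch_refl: "u \<in> S \<Longrightarrow> rch E S u u"
  unfolding rch_def by (intro exI[of _ "[u]"]) auto

lemma rch_edge: "E u v \<Longrightarrow> u \<in> S \<Longrightarrow> v \<in> S \<Longrightarrow> rch E S u v"
  unfolding rch_def by (intro exI[of _ "[u,v]"]) auto

lemma rch_mono: "rch E S u v \<Longrightarrow> S \<subseteq> T \<Longrightarrow> rch E T u v"
  unfolding rch_def by blast

lemma rch_trans: assumes "rch E S u v" "rch E S v w" shows "rch E S u w"
proof -
  obtain xs where xs: "walk E xs" "hd xs = u" "last xs = v" "set xs \<subseteq> S" using assms(1) rch_def by metis
  obtain ys where ys: "walk E ys" "hd ys = v" "last ys = w" "set ys \<subseteq> S" using assms(2) rch_def by metis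
  have xn: "xs \<noteq> []" "ys \<noteq> []" using xs ys walk_ne by auto
  then obtain y ys' where ysd: "ys = y # ys'" by (cases ys) auto
  show ?thesis
  proof (cases "ys' = []")
    case True then show ?thesis using xs ys ysd by (auto simp: rch_def)
  next
    case False
    have "walk E (xs @ ys')" using xs ys ysd False xn by (simp add: walk_append walk_Cons)
    moreover have "last (xs @ ys') = w" using ys ysd False by simp
    moreover have "hd (xs @ ys') = u" using xs xn by simp
    moreover have "set (xs @ ys') \<subseteq> S" using xs ys ysd by auto
    ultimately show ?thesis unfolding rch_def by blast
  qed
qed

lemma rch_sym: assumes "\<forall>u v. E u v \<longrightarrow> E v u" "rch E S u v" shows "rch E S v u"
proof -
  obtain xs where xs: "walk E xs" "hd xs = u" "last xs = v" "set xs \<subseteq> S" using assms(2) rch_def by metis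
  have "xs \<noteq> []" using xs walk_ne by auto
  then show ?thesis using xs walk_rev[OF assms(1)] unfolding rch_def
    by (intro exI[of _ "rev xs"]) (auto simp: hd_rev last_rev)
qed

lemma walk_rch_hd: "walk E xs \<Longrightarrow> y \<in> set xs \<Longrightarrow> rch E (set xs) (hd xs) y"
proof (induction xs)
  case Nil then show ?case by simp
next
  case (Cons x xs)
  show ?case
  proof (cases "y = x")
    case True then show ?thesis by (simp add: rch_refl)
  next
    case False
    then have ne: "xs \<noteq> []" using Cons.prems by auto
    then have w: "walk E xs" "E x (hd xs)" using Cons.prems by (auto simp: walk_Cons)
    have "rch E (set xs) (hd xs) y" using Cons False w by auto
    then have 1: "rch E (set (x # xs)) (hd xs) y" by (rule rch_mono) auto
    have 2: "rch E (set (x # xs)) x (hd xs)" using w ne by (intro rch_edge) auto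
    show ?thesis using rch_trans[OF 2 1] by simp
  qed
qed

lemma conn_walk: assumes "\<forall>u v. E u v \<longrightarrow> E v u" "walk E xs" shows "conn_on E (set xs)"
  unfolding conn_on_rch
proof (intro ballI)
  fix u v assume "u \<in> set xs" "v \<in> set xs"
  then have a: "rch E (set xs) (hd xs) u" and b: "rch E (set xs) (hd xs) v"
    using walk_rch_hd[OF assms(2)] by auto
  have "rch E (set xs) u (hd xs)" by (rule rch_sym[OF assms(1) a])
  then show "rch E (set xs) u v" using b by (rule rch_trans)
qed

lemma conn_union: assumes "\<forall>u v. E u v \<longrightarrow> E v u" "conn_on E S" "conn_on E T" "z \<in> S" "z \<in> T"
  shows "conn_on E (S \<union> T)"
  unfolding conn_on_rch
proof (intro ballI)
  have a: "rch E (S \<union> T) z w" if "w \<in> S \<union> T" for w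
  proof (cases "w \<in> S")
    case True then have "rch E S z w" using assms(2,4) conn_on_rch by metis
    then show ?thesis by (rule rch_mono) auto
  next
    case False then have "w \<in> T" using that by auto
    then have "rch E T z w" using assms(3,5) conn_on_rch by metis
    then show ?thesis by (rule rch_mono) auto
  qed
  fix u v assume "u \<in> S \<union> T" "v \<in> S \<union> T"
  then have "rch E (S \<union> T) u z" "rch E (S \<union> T) z v" using a rch_sym[OF assms(1)] by blast+
  then show "rch E (S \<union> T) u v" by (rule rch_trans)
qed




locale BG =
  fixes V :: "'a set" and E :: "'a \<Rightarrow> 'a \<Rightarrow> bool"
  assumes bg: "block_graph V E" and two: "card V \<ge> 2"
begin

lemma finV: "finite V" using two card.infinite by fastforce
lemma sym: "\<forall>u v. E u v \<longrightarrow> E v u"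
  using bg by (simp add: block_graph_def connected_graph_def simple_graph_def)
lemma irr: "\<not> E u u"
  using bg by (simp add: block_graph_def connected_graph_def simple_graph_def)
lemma EV: "E u v \<Longrightarrow> u \<in> V \<and> v \<in> V"
  using bg by (simp add: block_graph_def connected_graph_def simple_graph_def)
lemma connV: "conn_on E V"
  using bg by (simp add: block_graph_def connected_graph_def)
lemma clique: "B \<in> blocks V E \<Longrightarrow> u \<in> B \<Longrightarrow> v \<in> B \<Longrightarrow> u \<noteq> v \<Longrightarrow> E u v"
  using bg by (simp add: block_graph_def)

abbreviation d where "d \<equiv> gdist E"

lemma walk_setV: "walk E xs \<Longrightarrow> hd xs \<in> V \<Longrightarrow> set xs \<subseteq> V"
proof (induction xs)
  case Nil then show ?case by simp
next
  case (Cons x xs)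
  show ?case
  proof (cases "xs = []")
    case True then show ?thesis using Cons by simp
  next
    case False
    then have "walk E xs" "E x (hd xs)" using Cons.prems by (auto simp: walk_Cons)
    then show ?thesis using Cons EV by auto
  qed
qed

lemma d_le: assumes "walk E xs" shows "d (hd xs) (last xs) < length xs"
proof -
  have ne: "xs \<noteq> []" using assms walk_ne by auto
  then have "length xs = Suc (length xs - 1)" by simp
  then have "d (hd xs) (last xs) \<le> length xs - 1"
    unfolding gdist_def using assms by (intro Least_le) blast
  then show ?thesis using ne by (cases xs) auto
qed

lemma d_walk: assumes "u \<in> V" "v \<in> V"
  shows "\<exists>xs. walk E xs \<and> hd xs = u \<and> last xs = v \<and> length xs = Suc (d u v)"
proof -
  obtain xs where xs: "walk E xs" "hd xs = u" "last xs = v"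
    using connV assms unfolding conn_on_def by blast
  then have "xs \<noteq> []" using walk_ne by auto
  then have "\<exists>k xs. walk E xs \<and> hd xs = u \<and> last xs = v \<and> length xs = Suc k"
    using xs by (intro exI[of _ "length xs - 1"] exI[of _ xs]) auto
  then show ?thesis unfolding gdist_def by (rule LeastI_ex)
qed

lemma d_refl: "d u u = 0"
  using d_le[of "[u]"] by simp

lemma d_zero: assumes "u \<in> V" "v \<in> V" "d u v = 0" shows "u = v"
proof -
  obtain xs where "walk E xs" "hd xs = u" "last xs = v" "length xs = Suc 0"
    using d_walk assms by force
  then show ?thesis by (cases xs) auto
qed

lemma d_sym_le: assumes "u \<in> V" "v \<in> V" shows "d v u \<le> d u v"
proof -
  obtain xs where xs: "walk E xs" "hd xs = u" "last xs = v" "length xs = Suc (d u v)"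
    using d_walk assms by blast
  have ne: "xs \<noteq> []" using xs walk_ne by auto
  have "walk E (rev xs)" using walk_rev[OF sym xs(1)] .
  from d_le[OF this] show ?thesis using xs ne by (simp add: hd_rev last_rev)
qed

lemma d_sym: "u \<in> V \<Longrightarrow> v \<in> V \<Longrightarrow> d u v = d v u"
  using d_sym_le by (simp add: antisym)

lemma d_edge: "E u v \<Longrightarrow> d u v \<le> 1"
  using d_le[of "[u,v]"] by simp

lemma d_tri: assumes "u \<in> V" "v \<in> V" "w \<in> V" shows "d u w \<le> d u v + d v w"
proof -
  obtain xs where xs: "walk E xs" "hd xs = u" "last xs = v" "length xs = Suc (d u v)"
    using d_walk assms by blast
  obtain ys where ys: "walk E ys" "hd ys = v" "last ys = w" "length ys = Suc (d v w)"
    using d_walk assms by blast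
  have ne: "xs \<noteq> []" "ys \<noteq> []" using xs ys walk_ne by auto
  then obtain y ys' where ysd: "ys = y # ys'" by (cases ys) auto
  show ?thesis
  proof (cases "ys' = []")
    case True then show ?thesis using xs ys ysd d_le[OF xs(1)] by simp
  next
    case False
    have "walk E (xs @ ys')" using xs ys ysd False ne by (simp add: walk_append walk_Cons)
    from d_le[OF this] show ?thesis using xs ys ysd ne False by simp
  qed
qed

lemma d_pred: assumes "u \<in> V" "v \<in> V" "d u v = Suc k" shows "\<exists>v'. E v' v \<and> d u v' = k"
proof -
  obtain xs where xs: "walk E xs" "hd xs = u" "last xs = v" "length xs = Suc (d u v)"
    using d_walk assms by blast
  let ?ys = "butlast xs"
  have ne: "?ys \<noteq> []" using xs assms by (cases xs) auto
  have xsd: "xs = ?ys @ [v]" using xs by (metis append_butlast_last_id list.size(3) nat.distinct(1))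
  have w: "walk E ?ys" and e: "E (last ?ys) v" using xs(1) ne walk_append[OF ne, of "[v]"] xsd by auto
  have "d u (last ?ys) < length ?ys" using d_le[OF w] ne xs xsd by (metis hd_append2)
  then have le: "d u (last ?ys) \<le> k" using xs assms by simp
  have "d u v \<le> d u (last ?ys) + d (last ?ys) v" using d_tri assms EV[OF e] by blast
  then have "d u v \<le> d u (last ?ys) + 1" using d_edge[OF e] by linarith
  then show ?thesis using le e assms by (intro exI[of _ "last ?ys"]) auto
qed

lemma shortest_form: assumes "v \<in> V" "a \<in> V"
  shows "\<exists>p. walk E (a # p) \<and> last (a # p) = v \<and> (\<forall>x\<in>set p. d v x < d v a) \<and> (p = [] \<longleftrightarrow> v = a)"
proof -
  obtain xs where xs: "walk E xs" "hd xs = v" "last xs = a" "length xs = Suc (d v a)"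
    using d_walk assms by blast
  have ne: "xs \<noteq> []" using xs walk_ne by auto
  define p where "p = tl (rev xs)"
  have rx: "rev xs = a # p" unfolding p_def using ne xs
    by (metis hd_rev list.collapse rev_is_Nil_conv)
  have xsd: "xs = rev p @ [a]" using rx by (metis rev_rev_ident rev.simps(2))
  have w: "walk E (a # p)" using walk_rev[OF sym xs(1)] rx by simp
  have l: "last (a # p) = v" using rx xs ne by (metis last_rev)
  have len: "length p = d v a" using xs rx by (metis length_Cons length_rev nat.inject)
  have "p = [] \<longleftrightarrow> v = a"
    using len d_zero[OF assms] d_refl l by auto
  moreover have "d v x < d v a" if x: "x \<in> set p" for x
  proof -
    obtain q1 q2 where "rev p = q1 @ x # q2" using x by (metis set_rev split_list)
    then have xs2: "xs = (q1 @ [x]) @ (q2 @ [a])" using xsd by simp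
    then have w1: "walk E (q1 @ [x])" using xs(1) walk_append[of "q1 @ [x]" "q2 @ [a]"] by simp
    have "hd (q1 @ [x]) = v" using xs2 xs by (metis append_is_Nil_conv hd_append2 not_Cons_self2)
    then have "d v x < length q1 + 1" using d_le[OF w1] by simp
    moreover have "length xs = length q1 + length q2 + 2" using xs2 by simp
    ultimately show ?thesis using xs by simp
  qed
  ultimately show ?thesis using w l by blast
qed

end



context BG begin

lemma blocks_finite: "finite (blocks V E)"
proof -
  have "blocks V E \<subseteq> Pow V" by (auto simp: blocks_def is_block_def)
  then show ?thesis using finV finite_subset by blast
qed

lemma blkD: assumes "B \<in> blocks V E"
  shows "B \<subseteq> V" "nocut_conn E B" "\<And>C. B \<subseteq> C \<Longrightarrow> C \<subseteq> V \<Longrightarrow> nocut_conn E C \<Longrightarrow> C = B"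
  using assms by (auto simp: blocks_def is_block_def)

lemma blk_fin: "B \<in> blocks V E \<Longrightarrow> finite B" using blkD(1) finV finite_subset by blast
lemma blk_ne: "B \<in> blocks V E \<Longrightarrow> B \<noteq> {}" using blkD(2) nocut_conn_def by blast

lemma no_detour:
  assumes "B \<in> blocks V E" "walk E (a # ms @ [b])" "a \<in> B" "b \<in> B" "a \<noteq> b" "ms \<noteq> []"
    "set ms \<inter> B = {}"
  shows False
  using assms(2,6,7)
proof (induction "length ms" arbitrary: ms rule: less_induct)
  case less
  show False
  proof (cases "distinct ms")
    case False
    then obtain xs ys zs y where msd: "ms = xs @ [y] @ ys @ [y] @ zs"
      using not_distinct_decomp by blast
    define P where "P = a # xs @ [y]"
    define R where "R = zs @ [b]"
    have orig: "a # ms @ [b] = P @ (ys @ y # R)" unfolding P_def R_def msd by simp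
    have "walk E (ys @ y # R)" using less.prems(1) orig walk_append[of P "ys @ y # R"]
      unfolding P_def by simp
    then have wyR: "walk E (y # R)"
      using walk_append[of ys "y # R"] by (cases "ys = []") auto
    have wP: "walk E P" using less.prems(1) orig walk_append[of P "ys @ y # R"]
      unfolding P_def by simp
    have "R \<noteq> []" unfolding R_def by simp
    then have "walk E R" "E y (hd R)" using wyR by (auto simp: walk_Cons)
    then have "walk E (P @ R)" using wP walk_append[of P R] unfolding P_def R_def by simp
    then have w': "walk E (a # (xs @ [y] @ zs) @ [b])" unfolding P_def R_def by simp
    show False
      by (rule less.hyps[OF _ w']) (use less.prems msd in auto)
  next
    case True
    have ab: "a \<notin> set ms" "b \<notin> set ms" using less.prems assms by auto
    define S where "S = B \<union> set ms"
    have BV: "B \<subseteq> V" using blkD(1)[OF assms(1)] .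
    have nB: "nocut_conn E B" using blkD(2)[OF assms(1)] .
    then have cB: "conn_on E B" "\<And>x. x \<in> B \<Longrightarrow> conn_on E (B - {x})" by (auto simp: nocut_conn_def)
    have SV: "S \<subseteq> V" using walk_setV[OF less.prems(1)] BV assms(3) unfolding S_def by auto
    have w: "walk E (a # ms @ [b])" by fact
    have "conn_on E (B \<union> set (a # ms @ [b]))"
      using conn_union[OF sym cB(1) conn_walk[OF sym w], of a] assms(3) by simp
    moreover have "B \<union> set (a # ms @ [b]) = S" unfolding S_def using assms(3,4) by auto
    ultimately have cS: "conn_on E S" by simp
    have "conn_on E (S - {x})" if x: "x \<in> S" for x
    proof (cases "x \<in> B")
      case True
      show ?thesis
      proof (cases "x = a")
        case True
        have "walk E (ms @ [b])" using w by (auto simp: walk_Cons)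
        from conn_union[OF sym cB(2)[OF \<open>x \<in> B\<close>] conn_walk[OF sym this], of b]
        have "conn_on E ((B - {x}) \<union> set (ms @ [b]))" using assms(4,5) True by simp
        moreover have "(B - {x}) \<union> set (ms @ [b]) = S - {x}" using True ab assms(4,5) unfolding S_def by auto
        ultimately show ?thesis by simp
      next
        case False
        have "walk E (a # ms)" using w walk_append[of "a # ms" "[b]"] by simp
        from conn_union[OF sym cB(2)[OF \<open>x \<in> B\<close>] conn_walk[OF sym this], of a]
        have "conn_on E ((B - {x}) \<union> set (a # ms))" using assms(3) False by simp
        moreover have "(B - {x}) \<union> set (a # ms) = S - {x}"
          using False \<open>x \<in> B\<close> less.prems(3) assms(3) unfolding S_def by auto
        ultimately show ?thesis by simp
      qed
    next
      case False
      then have xm: "x \<in> set ms" using x unfolding S_def by auto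
      then obtain p q where msd: "ms = p @ x # q" by (meson split_list)
      have xpq: "x \<notin> set p" "x \<notin> set q" using True msd by auto
      have wd: "a # ms @ [b] = (a # p) @ (x # q @ [b])" using msd by simp
      have w1: "walk E (a # p)" and w2': "walk E (x # q @ [b])"
        using w walk_append[of "a # p" "x # q @ [b]"] wd by auto
      have w2: "walk E (q @ [b])" using w2' by (auto simp: walk_Cons)
      have c1: "conn_on E (B \<union> set (a # p))"
        using conn_union[OF sym cB(1) conn_walk[OF sym w1], of a] assms(3) by simp
      have c2: "conn_on E ((B \<union> set (a # p)) \<union> set (q @ [b]))"
        using conn_union[OF sym c1 conn_walk[OF sym w2], of b] assms(4) by simp
      have "(B \<union> set (a # p)) \<union> set (q @ [b]) = S - {x}"
        using False xpq assms(3,4) msd unfolding S_def by auto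
      then show ?thesis using c2 by simp
    qed
    then have "nocut_conn E S" using cS unfolding nocut_conn_def S_def using assms(3) by auto
    then have "S = B" using blkD(3)[OF assms(1) _ SV] unfolding S_def by auto
    then show False using less.prems(2,3) unfolding S_def by (cases ms) auto
  qed
qed

lemma nocut_pair: assumes "E u v" shows "nocut_conn E {u, v}"
proof -
  have "conn_on E (set [u, v])" by (rule conn_walk[OF sym]) (simp add: assms)
  moreover have "conn_on E (set [w])" for w by (rule conn_walk[OF sym]) simp
  moreover have "u \<noteq> v" using assms irr by auto
  ultimately show ?thesis unfolding nocut_conn_def
    by (auto simp: insert_Diff_if)
qed

lemma blk_edge: assumes "E u v" shows "\<exists>B\<in>blocks V E. u \<in> B \<and> v \<in> B"
proof -
  define M where "M = {C. {u, v} \<subseteq> C \<and> C \<subseteq> V \<and> nocut_conn E C}"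
  have fM: "finite M" using finV unfolding M_def by (auto intro: finite_subset[of _ "Pow V"])
  have uvM: "{u, v} \<in> M" using nocut_pair[OF assms] EV[OF assms] unfolding M_def by auto
  define m where "m = Max (card ` M)"
  have "m \<in> card ` M" unfolding m_def using fM uvM by (intro Max_in) auto
  then obtain B where B: "B \<in> M" "card B = m" by auto
  have mx: "card C \<le> card B" if "C \<in> M" for C using B fM that unfolding m_def by auto
  have "is_block V E B"
    unfolding is_block_def
  proof (intro conjI allI impI)
    show "B \<subseteq> V" "nocut_conn E B" using B unfolding M_def by auto
    fix C assume C: "B \<subseteq> C \<and> C \<subseteq> V \<and> nocut_conn E C"
    then have "C \<in> M" using B unfolding M_def by auto
    then have "card C \<le> card B" by (rule mx)
    moreover have "finite C" using C finV finite_subset by blast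
    ultimately show "C = B" using C card_seteq by blast
  qed
  then show ?thesis using B unfolding M_def blocks_def by auto
qed

lemma two_share: assumes "B1 \<in> blocks V E" "B2 \<in> blocks V E" "x \<in> B1" "x \<in> B2" "y \<in> B1" "y \<in> B2"
  "x \<noteq> y" shows "B1 = B2"
proof (rule ccontr)
  assume ne: "B1 \<noteq> B2"
  have "\<not> B2 \<subseteq> B1"
    using blkD(3)[OF assms(2), of B1] blkD(1,2)[OF assms(1)] ne by auto
  then obtain c where c: "c \<in> B2" "c \<notin> B1" by auto
  have w: "walk E (x # [c] @ [y])" using clique[OF assms(2)] assms c by auto
  show False using no_detour[OF assms(1) w assms(3,5,7)] c by auto
qed

definition g where "g B u = (SOME a. a \<in> B \<and> (\<forall>c\<in>B. d u a \<le> d u c))"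

lemma g_ex: assumes "B \<in> blocks V E" shows "g B u \<in> B" "\<And>c. c \<in> B \<Longrightarrow> d u (g B u) \<le> d u c"
proof -
  have "\<exists>a. a \<in> B \<and> (\<forall>c\<in>B. d u a \<le> d u c)"
  proof -
    have "Min (d u ` B) \<in> d u ` B" using blk_fin[OF assms] blk_ne[OF assms] by (intro Min_in) auto
    then obtain a where "a \<in> B" "d u a = Min (d u ` B)" by auto
    then show ?thesis using blk_fin[OF assms] by (intro exI[of _ a]) auto
  qed
  from someI_ex[OF this] show "g B u \<in> B" "\<And>c. c \<in> B \<Longrightarrow> d u (g B u) \<le> d u c"
    unfolding g_def by auto
qed

lemma core: assumes C: "C \<in> blocks V E" and e: "E v v'" and a: "a \<in> C" "\<forall>c\<in>C. d v a \<le> d v c"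
  and b: "b \<in> C" "\<forall>c\<in>C. d v' b \<le> d v' c" and ab: "a \<noteq> b"
  shows "v = a \<and> v' = b"
proof (rule ccontr)
  assume nn: "\<not> (v = a \<and> v' = b)"
  have CV: "C \<subseteq> V" using blkD(1)[OF C] .
  obtain p where p: "walk E (a # p)" "last (a # p) = v" "\<forall>x\<in>set p. d v x < d v a" "p = [] \<longleftrightarrow> v = a"
    using shortest_form[of v a] EV[OF e] a CV by blast
  obtain q where q: "walk E (b # q)" "last (b # q) = v'" "\<forall>x\<in>set q. d v' x < d v' b" "q = [] \<longleftrightarrow> v' = b"
    using shortest_form[of v' b] EV[OF e] b CV by blast
  have "walk E (rev (b # q))" using walk_rev[OF sym q(1)] .
  moreover have "hd (rev (b # q)) = v'" by (metis hd_rev q(2))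
  ultimately have "walk E ((a # p) @ rev (b # q))" using walk_append[of "a # p" "rev (b # q)"] p e by simp
  then have w: "walk E (a # (p @ rev q) @ [b])" by simp
  have dj: "set (p @ rev q) \<inter> C = {}" using p(3) q(3) a(2) b(2) by fastforce
  show False using no_detour[OF C w a(1) b(1) ab _ dj] nn p(4) q(4) by auto
qed

lemma nearest_unique: assumes C: "C \<in> blocks V E" and u: "u \<in> V"
  and a: "a \<in> C" "\<forall>c\<in>C. d u a \<le> d u c" and b: "b \<in> C" "\<forall>c\<in>C. d u b \<le> d u c"
  shows "a = b"
proof (rule ccontr)
  assume ab: "a \<noteq> b"
  have CV: "C \<subseteq> V" using blkD(1)[OF C] .
  have eq: "d u a = d u b" using a b by (simp add: antisym)
  have ua: "u \<noteq> a" "u \<noteq> b"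
    using eq d_refl d_zero[OF u] CV a b ab by (metis subsetD)+
  obtain p where p: "walk E (a # p)" "last (a # p) = u" "\<forall>x\<in>set p. d u x < d u a" "p = [] \<longleftrightarrow> u = a"
    using shortest_form[of u a] u a CV by blast
  obtain q where q: "walk E (b # q)" "last (b # q) = u" "\<forall>x\<in>set q. d u x < d u b" "q = [] \<longleftrightarrow> u = b"
    using shortest_form[of u b] u b CV by blast
  have qne: "q \<noteq> []" using q(4) ua by auto
  have "hd (rev q) = u" using q(2) qne by (simp add: hd_rev)
  then obtain q' where rq: "rev q = u # q'" using qne by (metis list.collapse rev_is_Nil_conv)
  have "walk E (rev (b # q))" using walk_rev[OF sym q(1)] .
  then have wq: "walk E (u # q' @ [b])" using rq by simp
  then have "walk E (q' @ [b])" "E u (hd (q' @ [b]))" by (auto simp: walk_Cons)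
  then have "walk E ((a # p) @ (q' @ [b]))" using walk_append[of "a # p" "q' @ [b]"] p by simp
  then have w: "walk E (a # (p @ q') @ [b])" by simp
  have "set q' \<subseteq> set q" using rq by (metis set_rev set_subset_Cons)
  then have dj: "set (p @ q') \<inter> C = {}" using p(3) q(3) a(2) b(2) by fastforce
  show False using no_detour[OF C w a(1) b(1) ab _ dj] p(4) ua by auto
qed

end



lemma walk_snoc: "walk E xs \<Longrightarrow> E (last xs) v \<Longrightarrow> walk E (xs @ [v])"
  using walk_append[of xs "[v]" E] walk_ne[of E xs] by simp

context BG begin

lemma g_V: "B \<in> blocks V E \<Longrightarrow> g B u \<in> V" using g_ex(1) blkD(1) by blast

lemma g_self: assumes "B \<in> blocks V E" "u \<in> B" shows "g B u = u"
proof -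
  have "d u (g B u) \<le> d u u" using g_ex(2)[OF assms] .
  then have "d u (g B u) = 0" using d_refl by simp
  moreover have "u \<in> V" using blkD(1)[OF assms(1)] assms(2) by blast
  ultimately have "u = g B u" using d_zero[OF _ g_V[OF assms(1)]] by blast
  then show ?thesis by (rule HOL.sym)
qed

lemma g_dist: assumes B: "B \<in> blocks V E" and u: "u \<in> V" and w: "w \<in> B" and ne: "w \<noteq> g B u"
  shows "d u w = d u (g B u) + 1"
proof -
  have BV: "B \<subseteq> V" using blkD(1)[OF B] .
  have "E (g B u) w" using clique[OF B g_ex(1)[OF B] w] ne by auto
  then have "d (g B u) w \<le> 1" by (rule d_edge)
  moreover have "d u w \<le> d u (g B u) + d (g B u) w"
    by (rule d_tri[OF u g_V[OF B]]) (use w BV in blast)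
  ultimately have le: "d u w \<le> d u (g B u) + 1" by linarith
  have ge: "d u (g B u) \<le> d u w" using g_ex(2)[OF B w] .
  have "d u w \<noteq> d u (g B u)"
  proof
    assume eq: "d u w = d u (g B u)"
    have "\<forall>c\<in>B. d u w \<le> d u c" unfolding eq using g_ex(2)[OF B] by blast
    moreover have "\<forall>c\<in>B. d u (g B u) \<le> d u c" using g_ex(2)[OF B] by blast
    ultimately have "w = g B u" by (rule nearest_unique[OF B u w _ g_ex(1)[OF B]])
    then show False using ne by simp
  qed
  then show ?thesis using le ge by linarith
qed

lemma g_dist': assumes "B \<in> blocks V E" "u \<in> V" "w \<in> B"
  shows "d u w = d u (g B u) + (if w = g B u then 0 else 1)"
  using g_dist[OF assms] by auto

lemma edge_gate: assumes C: "C \<in> blocks V E" and e: "E v v'" and nb: "\<not> (v \<in> C \<and> v' \<in> C)"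
  shows "g C v = g C v'"
proof (rule ccontr)
  assume "g C v \<noteq> g C v'"
  moreover have "\<forall>c\<in>C. d v (g C v) \<le> d v c" "\<forall>c\<in>C. d v' (g C v') \<le> d v' c"
    using g_ex(2)[OF C] by blast+
  ultimately have "v = g C v \<and> v' = g C v'"
    using core[OF C e g_ex(1)[OF C] _ g_ex(1)[OF C]] by blast
  then have h1: "g C v = v" and h2: "g C v' = v'" by (blast intro: HOL.sym)+
  have "g C v \<in> C" "g C v' \<in> C" using g_ex(1)[OF C] by blast+
  then have "v \<in> C" "v' \<in> C" by (simp_all only: h1 h2)
  then show False using nb by blast
qed

lemma F3_ex: assumes u: "u \<in> V" and v: "v \<in> V" and uv: "u \<noteq> v"
  shows "\<exists>B\<in>blocks V E. v \<in> B \<and> g B u \<noteq> v"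
proof -
  have "d u v \<noteq> 0"
  proof
    assume "d u v = 0" then have "u = v" by (rule d_zero[OF u v])
    with uv show False by simp
  qed
  then obtain k where k: "d u v = Suc k" by (cases "d u v") auto
  obtain v' where v': "E v' v" "d u v' = k" using d_pred[OF u v k] by blast
  obtain B where B: "B \<in> blocks V E" "v' \<in> B" "v \<in> B" using blk_edge[OF v'(1)] by blast
  have "g B u \<noteq> v"
  proof
    assume "g B u = v"
    then have "d u v \<le> d u v'" using g_ex(2)[OF B(1) B(2), of u] by simp
    then show False using k v' by simp
  qed
  then show ?thesis using B by blast
qed

lemma F3_uniq: assumes u: "u \<in> V" and B1: "B1 \<in> blocks V E" and B2: "B2 \<in> blocks V E"
  and v1: "v \<in> B1" and v2: "v \<in> B2" and g1: "g B1 u \<noteq> v" and g2: "g B2 u \<noteq> v"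
  shows "B1 = B2"
proof (rule ccontr)
  assume ne: "B1 \<noteq> B2"
  define a1 where "a1 = g B1 u"
  define a2 where "a2 = g B2 u"
  have B1V: "B1 \<subseteq> V" using blkD(1)[OF B1] .
  have a1: "a1 \<in> B1" "\<forall>c\<in>B1. d u a1 \<le> d u c" using g_ex[OF B1] unfolding a1_def by auto
  have a2: "a2 \<in> B2" "\<forall>c\<in>B2. d u a2 \<le> d u c" using g_ex[OF B2] unfolding a2_def by auto
  have a1V: "a1 \<in> V" "a2 \<in> V" using g_V B1 B2 unfolding a1_def a2_def by auto
  have eq: "d u a1 = d u a2"
    using g_dist[OF B1 u v1 g1[symmetric]] g_dist[OF B2 u v2 g2[symmetric]] unfolding a1_def a2_def
    by simp
  have a2n: "a2 \<notin> B1"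
  proof
    assume a2B1: "a2 \<in> B1"
    have "\<forall>c\<in>B1. d u a2 \<le> d u c" using a1(2) eq by simp
    then have "a2 = a1" using nearest_unique[OF B1 u a2B1 _ a1(1)] a1(2) by blast
    then have "B1 = B2" using two_share[OF B1 B2 a1(1) _ v1 v2] a2(1) g1 unfolding a1_def by simp
    then show False using ne by simp
  qed
  have ua: "u \<noteq> a1" "u \<noteq> a2"
  proof -
    have "a1 = a2" if "u = a1 \<or> u = a2"
    proof -
      have "d u a1 = 0 \<and> d u a2 = 0" using that eq d_refl by auto
      then have "u = a1" "u = a2" using d_zero[OF u a1V(1)] d_zero[OF u a1V(2)] by auto
      then show ?thesis by simp
    qed
    then show "u \<noteq> a1" "u \<noteq> a2" using a2n a1(1) by auto
  qed
  obtain p where p: "walk E (a1 # p)" "last (a1 # p) = u" "\<forall>x\<in>set p. d u x < d u a1" "p = [] \<longleftrightarrow> u = a1"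
    using shortest_form[of u a1] u a1V by blast
  obtain q where q: "walk E (a2 # q)" "last (a2 # q) = u" "\<forall>x\<in>set q. d u x < d u a2" "q = [] \<longleftrightarrow> u = a2"
    using shortest_form[of u a2] u a1V by blast
  have qne: "q \<noteq> []" using q(4) ua by auto
  have "hd (rev q) = u" using q(2) qne by (simp add: hd_rev)
  then obtain q' where rq: "rev q = u # q'" using qne by (metis list.collapse rev_is_Nil_conv)
  have "walk E (rev (a2 # q))" using walk_rev[OF sym q(1)] .
  then have wq: "walk E (u # q' @ [a2])" using rq by simp
  then have "walk E (q' @ [a2])" "E u (hd (q' @ [a2]))" by (auto simp: walk_Cons)
  then have w0: "walk E ((a1 # p) @ (q' @ [a2]))" using walk_append[of "a1 # p" "q' @ [a2]"] p by simp
  have e: "E a2 v" using clique[OF B2 a2(1) v2] g2 unfolding a2_def by simp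
  have "walk E (((a1 # p) @ (q' @ [a2])) @ [v])" by (rule walk_snoc[OF w0]) (simp add: e)
  then have w: "walk E (a1 # (p @ q' @ [a2]) @ [v])" by simp
  have "set q' \<subseteq> set q" using rq by (metis set_rev set_subset_Cons)
  then have dj: "set (p @ q' @ [a2]) \<inter> B1 = {}" using p(3) q(3) a1(2) eq a2n by fastforce
  show False using no_detour[OF B1 w a1(1) v1 _ _ dj] g1 unfolding a1_def by auto
qed

lemma F3_set: assumes u: "u \<in> V" and v: "v \<in> V"
  shows "{B \<in> blocks V E. v \<in> B \<and> g B u \<noteq> v} = (if u = v then {} else {THE B. B \<in> blocks V E \<and> v \<in> B \<and> g B u \<noteq> v})"
proof (cases "u = v")
  case True then show ?thesis using g_self by auto
next
  case False
  obtain B where B: "B \<in> blocks V E" "v \<in> B" "g B u \<noteq> v" using F3_ex[OF u v False] by blast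
  have un: "B' = B" if "B' \<in> blocks V E" "v \<in> B'" "g B' u \<noteq> v" for B'
    using F3_uniq[OF u that(1) B(1) that(2) B(2) that(3) B(3)] .
  have "(THE B. B \<in> blocks V E \<and> v \<in> B \<and> g B u \<noteq> v) = B" using B un by (intro the_equality) blast+
  moreover have "{B \<in> blocks V E. v \<in> B \<and> g B u \<noteq> v} = {B}" using B un by blast
  ultimately show ?thesis using False by simp
qed

lemma F3_sum: assumes u: "u \<in> V" and v: "v \<in> V"
  shows "(\<Sum>B\<in>blocks V E. if v \<in> B \<and> g B u \<noteq> v then (1::real) else 0) = (if u = v then 0 else 1)"
proof -
  have "(\<Sum>B\<in>blocks V E. if v \<in> B \<and> g B u \<noteq> v then (1::real) else 0)
      = real (card {B \<in> blocks V E. v \<in> B \<and> g B u \<noteq> v})"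
    using blocks_finite by (simp add: sum.If_cases Int_def)
  also have "\<dots> = (if u = v then 0 else 1)" using F3_set[OF u v] by simp
  finally show ?thesis .
qed

lemma F1: assumes u: "u \<in> V" shows "v \<in> V \<Longrightarrow> d u v = card {B \<in> blocks V E. g B u \<noteq> g B v}"
proof (induction "d u v" arbitrary: v)
  case 0
  then have "u = v" using d_zero[OF u 0(2)] by simp
  then have "v = u" by (rule HOL.sym)
  then show ?case by (simp add: d_refl)
next
  case (Suc k)
  obtain v' where v': "E v' v" "d u v' = k" using d_pred[OF u Suc.prems Suc.hyps(2)[symmetric]] by blast
  have v'V: "v' \<in> V" using EV v' by blast
  have IH: "k = card {B \<in> blocks V E. g B u \<noteq> g B v'}" using Suc.hyps(1)[OF v'(2)[symmetric] v'V] v'(2) by simp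
  obtain B0 where B0: "B0 \<in> blocks V E" "v' \<in> B0" "v \<in> B0" using blk_edge[OF v'(1)] by blast
  have gB0: "g B0 u = v'"
  proof (rule ccontr)
    assume ne: "g B0 u \<noteq> v'"
    have 1: "d u v' = d u (g B0 u) + 1" using g_dist[OF B0(1) u B0(2)] ne by auto
    show False
    proof (cases "g B0 u = v")
      case True then have "d u v \<le> d u v'" using g_ex(2)[OF B0(1) B0(2), of u] by simp
      then show ?thesis using Suc.hyps(2) v' by simp
    next
      case False then have "d u v = d u (g B0 u) + 1" using g_dist[OF B0(1) u B0(3)] by auto
      then show ?thesis using 1 Suc.hyps(2) v' by simp
    qed
  qed
  have vv': "v \<noteq> v'" using v'(1) irr by auto
  have oth: "g C v = g C v'" if C: "C \<in> blocks V E" "C \<noteq> B0" for C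
  proof -
    have "\<not> (v \<in> C \<and> v' \<in> C)"
    proof
      assume h: "v \<in> C \<and> v' \<in> C"
      then have "C = B0" using two_share[OF C(1) B0(1) _ B0(3) _ B0(2) vv'] by blast
      with C(2) show False by simp
    qed
    then show ?thesis using edge_gate[OF C(1) sym[rule_format, OF v'(1)]] by blast
  qed
  have "{B \<in> blocks V E. g B u \<noteq> g B v} = insert B0 {B \<in> blocks V E. g B u \<noteq> g B v'}"
  proof (rule set_eqI)
    fix C
    show "C \<in> {B \<in> blocks V E. g B u \<noteq> g B v} \<longleftrightarrow> C \<in> insert B0 {B \<in> blocks V E. g B u \<noteq> g B v'}"
    proof (cases "C = B0")
      case True then show ?thesis using B0(1) gB0 g_self[OF B0(1) B0(3)] vv' by simp
    next
      case False then show ?thesis using oth[of C] by (cases "C \<in> blocks V E") auto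
    qed
  qed
  moreover have "B0 \<notin> {B \<in> blocks V E. g B u \<noteq> g B v'}" using gB0 g_self[OF B0(1) B0(2)] by simp
  ultimately have "card {B \<in> blocks V E. g B u \<noteq> g B v} = Suc k"
    using IH blocks_finite by simp
  then show ?case using Suc.hyps(2) by simp
qed

end



context BG begin

lemma blk_card: "B \<in> blocks V E \<Longrightarrow> real (card B) > 0"
  using blk_fin blk_ne by (simp add: card_gt_0_iff)

lemma beta_alt: "beta V E v = 1 - (\<Sum>B\<in>blocks V E. if v \<in> B then 1 - 1 / real (card B) else 0)"
proof -
  have "(\<Sum>B\<in>blocks V E. if v \<in> B then 1 - 1 / real (card B) else 0)
      = (\<Sum>B\<in>{B \<in> blocks V E. v \<in> B}. 1 - 1 / real (card B))"
    using blocks_finite by (simp add: sum.inter_filter)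
  also have "\<dots> = real (card {B \<in> blocks V E. v \<in> B}) - (\<Sum>B\<in>{B \<in> blocks V E. v \<in> B}. 1 / real (card B))"
    by (simp add: sum_subtractf)
  finally show ?thesis unfolding beta_def by simp
qed

lemma block_sum: assumes B: "B \<in> blocks V E" and u: "u \<in> V"
  shows "(\<Sum>v\<in>B. real (d u v)) = real (card B) * real (d u (g B u)) + (real (card B) - 1)"
proof -
  have "(\<Sum>v\<in>B. real (d u v)) = (\<Sum>v\<in>B. real (d u (g B u)) + (1 - (if v = g B u then 1 else 0)))"
    by (rule sum.cong) (use g_dist'[OF B u] in auto)
  also have "\<dots> = real (card B) * real (d u (g B u)) + (real (card B) - 1)"
    using blk_fin[OF B] g_ex(1)[OF B, of u] by (simp add: sum.distrib sum_subtractf)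
  finally show ?thesis .
qed

lemma total_sum: assumes u: "u \<in> V"
  shows "(\<Sum>v\<in>V. real (d u v)) = (\<Sum>B\<in>blocks V E. (real (card B) - 1) * (real (d u (g B u)) + 1))"
proof -
  have "(\<Sum>v\<in>V. real (d u v)) = (\<Sum>v\<in>V. \<Sum>B\<in>blocks V E. if v \<in> B \<and> g B u \<noteq> v then real (d u v) else 0)"
  proof (rule sum.cong[OF refl])
    fix v assume v: "v \<in> V"
    have "(\<Sum>B\<in>blocks V E. if v \<in> B \<and> g B u \<noteq> v then real (d u v) else 0)
        = (\<Sum>B\<in>blocks V E. (if v \<in> B \<and> g B u \<noteq> v then 1 else 0) * real (d u v))"
      by (rule sum.cong) auto
    also have "\<dots> = (if u = v then 0 else 1) * real (d u v)"
      by (simp only: sum_distrib_right[symmetric] F3_sum[OF u v])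
    also have "\<dots> = real (d u v)" using d_refl by auto
    finally show "real (d u v) = (\<Sum>B\<in>blocks V E. if v \<in> B \<and> g B u \<noteq> v then real (d u v) else 0)" by simp
  qed
  also have "\<dots> = (\<Sum>B\<in>blocks V E. \<Sum>v\<in>V. if v \<in> B \<and> g B u \<noteq> v then real (d u v) else 0)"
    by (rule sum.swap)
  also have "\<dots> = (\<Sum>B\<in>blocks V E. (real (card B) - 1) * (real (d u (g B u)) + 1))"
  proof (rule sum.cong[OF refl])
    fix B assume B: "B \<in> blocks V E"
    have BV: "B \<subseteq> V" using blkD(1)[OF B] .
    have "(\<Sum>v\<in>V. if v \<in> B \<and> g B u \<noteq> v then real (d u v) else 0) = (\<Sum>v\<in>{v \<in> V. v \<in> B \<and> g B u \<noteq> v}. real (d u v))"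
      using finV by (simp add: sum.inter_filter)
    also have "{v \<in> V. v \<in> B \<and> g B u \<noteq> v} = B - {g B u}" using BV by auto
    also have "(\<Sum>v\<in>B - {g B u}. real (d u v)) = (\<Sum>v\<in>B - {g B u}. real (d u (g B u)) + 1)"
      by (rule sum.cong[OF refl]) (use g_dist[OF B u] in auto)
    also have "\<dots> = (real (card B) - 1) * (real (d u (g B u)) + 1)"
    proof -
      have "card B \<ge> 1" using blk_fin[OF B] g_ex(1)[OF B, of u] by (metis One_nat_def Suc_leI card_gt_0_iff empty_iff)
      then show ?thesis using blk_fin[OF B] g_ex(1)[OF B, of u] by (simp add: card_Diff_singleton of_nat_diff)
    qed
    finally show "(\<Sum>v\<in>V. if v \<in> B \<and> g B u \<noteq> v then real (d u v) else 0) = (real (card B) - 1) * (real (d u (g B u)) + 1)" .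
  qed
  finally show ?thesis .
qed

lemma exist_id: assumes u: "u \<in> V"
  shows "(\<Sum>v\<in>V. real (d u v) * beta V E v) = lambda_G V E"
proof -
  let ?c = "\<lambda>B. 1 - 1 / real (card B)"
  have "(\<Sum>v\<in>V. real (d u v) * beta V E v)
      = (\<Sum>v\<in>V. real (d u v)) - (\<Sum>v\<in>V. \<Sum>B\<in>blocks V E. if v \<in> B then ?c B * real (d u v) else 0)"
    unfolding beta_alt by (simp add: algebra_simps sum_subtractf sum_distrib_left if_distrib cong: if_cong)
  also have "(\<Sum>v\<in>V. \<Sum>B\<in>blocks V E. if v \<in> B then ?c B * real (d u v) else 0)
      = (\<Sum>B\<in>blocks V E. ?c B * (\<Sum>v\<in>B. real (d u v)))"
  proof -
    have "(\<Sum>v\<in>V. \<Sum>B\<in>blocks V E. if v \<in> B then ?c B * real (d u v) else 0)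
        = (\<Sum>B\<in>blocks V E. \<Sum>v\<in>V. if v \<in> B then ?c B * real (d u v) else 0)" by (rule sum.swap)
    also have "\<dots> = (\<Sum>B\<in>blocks V E. ?c B * (\<Sum>v\<in>B. real (d u v)))"
    proof (rule sum.cong[OF refl])
      fix B assume B: "B \<in> blocks V E"
      have "(\<Sum>v\<in>V. if v \<in> B then ?c B * real (d u v) else 0) = (\<Sum>v\<in>{v\<in>V. v \<in> B}. ?c B * real (d u v))"
        using finV by (simp add: sum.inter_filter)
      also have "{v\<in>V. v \<in> B} = B" using blkD(1)[OF B] by auto
      finally show "(\<Sum>v\<in>V. if v \<in> B then ?c B * real (d u v) else 0) = ?c B * (\<Sum>v\<in>B. real (d u v))"
        by (simp add: sum_distrib_left)
    qed
    finally show ?thesis .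
  qed
  also have "(\<Sum>B\<in>blocks V E. ?c B * (\<Sum>v\<in>B. real (d u v)))
      = (\<Sum>B\<in>blocks V E. ?c B * (real (card B) * real (d u (g B u)) + (real (card B) - 1)))"
    by (rule sum.cong[OF refl]) (simp add: block_sum[OF _ u])
  finally have 1: "(\<Sum>v\<in>V. real (d u v) * beta V E v)
     = (\<Sum>B\<in>blocks V E. (real (card B) - 1) * (real (d u (g B u)) + 1) -
          ?c B * (real (card B) * real (d u (g B u)) + (real (card B) - 1)))"
    unfolding total_sum[OF u] by (simp add: sum_subtractf)
  also have "\<dots> = (\<Sum>B\<in>blocks V E. (real (card B) - 1) / real (card B))"
  proof (rule sum.cong[OF refl])
    fix B assume B: "B \<in> blocks V E"
    have m: "real (card B) > 0" using blk_card[OF B] .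
    show "(real (card B) - 1) * (real (d u (g B u)) + 1) -
          ?c B * (real (card B) * real (d u (g B u)) + (real (card B) - 1)) = (real (card B) - 1) / real (card B)"
      using m by (simp add: field_simps)
  qed
  finally show ?thesis unfolding lambda_G_def .
qed

lemma lambda_pos: "lambda_G V E > 0"
proof -
  have "V \<noteq> {}" using two by auto
  then obtain u where u: "u \<in> V" by auto
  have "card (V - {u}) \<ge> 1" using two u finV by (simp add: card_Diff_singleton)
  then have "V - {u} \<noteq> {}" by (metis card.empty not_one_le_zero)
  then obtain v where v: "v \<in> V" "v \<noteq> u" by auto
  have "d u v \<noteq> 0"
  proof
    assume "d u v = 0" then have "u = v" by (rule d_zero[OF u v(1)])
    with v show False by simp
  qed
  then obtain k where k: "d u v = Suc k" by (cases "d u v") auto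
  obtain v' where v': "E v' v" using d_pred[OF u v(1) k] by blast
  obtain B0 where B0: "B0 \<in> blocks V E" "v' \<in> B0" "v \<in> B0" using blk_edge[OF v'] by blast
  have "v' \<noteq> v" using v' irr by auto
  then have c2: "card {v', v} = 2" by simp
  have "card {v', v} \<le> card B0" by (rule card_mono) (use B0 blk_fin[OF B0(1)] in auto)
  then have "card B0 \<ge> 2" using c2 by simp
  then have "(real (card B0) - 1) / real (card B0) > 0" by simp
  moreover have "\<And>B. B \<in> blocks V E \<Longrightarrow> (real (card B) - 1) / real (card B) \<ge> 0"
  proof -
    fix B assume "B \<in> blocks V E"
    then have "card B \<ge> 1" using blk_fin blk_ne by (simp add: Suc_le_eq card_gt_0_iff)
    then show "(real (card B) - 1) / real (card B) \<ge> 0" by simp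
  qed
  ultimately show ?thesis unfolding lambda_G_def using blocks_finite B0(1) by (intro sum_pos2) auto
qed

end



context BG begin

lemma F1r: assumes "u \<in> V" "v \<in> V"
  shows "real (d u v) = (\<Sum>B\<in>blocks V E. if g B u \<noteq> g B v then 1 else 0)"
proof -
  have "(\<Sum>B\<in>blocks V E. if g B u \<noteq> g B v then (1::real) else 0) = (\<Sum>B\<in>{B\<in>blocks V E. g B u \<noteq> g B v}. 1)"
    using sum.inter_filter[OF blocks_finite, of "\<lambda>_. 1::real" "\<lambda>B. g B u \<noteq> g B v"] by simp
  also have "\<dots> = real (card {B\<in>blocks V E. g B u \<noteq> g B v})" by simp
  finally show ?thesis using F1[OF assms] by simp
qed

lemma blkq: fixes x :: "'a \<Rightarrow> real" assumes B: "B \<in> blocks V E" and s0: "(\<Sum>v\<in>V. x v) = 0"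
  shows "(\<Sum>u\<in>V. \<Sum>v\<in>V. x u * x v * (if g B u \<noteq> g B v then 1 else 0))
       = - (\<Sum>w\<in>B. (\<Sum>u\<in>V. if g B u = w then x u else 0)^2)"
proof -
  have fB: "finite B" using blk_fin[OF B] .
  have "(\<Sum>w\<in>B. (\<Sum>u\<in>V. if g B u = w then x u else 0)^2)
      = (\<Sum>w\<in>B. \<Sum>u\<in>V. \<Sum>v\<in>V. (if g B u = w then x u else 0) * (if g B v = w then x v else 0))"
    by (intro sum.cong[OF refl]) (subst power2_eq_square, rule sum_product)
  also have "\<dots> = (\<Sum>u\<in>V. \<Sum>w\<in>B. \<Sum>v\<in>V. (if g B u = w then x u else 0) * (if g B v = w then x v else 0))"
    by (rule sum.swap)
  also have "\<dots> = (\<Sum>u\<in>V. \<Sum>v\<in>V. \<Sum>w\<in>B. (if g B u = w then x u else 0) * (if g B v = w then x v else 0))"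
    by (rule sum.cong[OF refl]) (rule sum.swap)
  also have "\<dots> = (\<Sum>u\<in>V. \<Sum>v\<in>V. x u * x v * (if g B u = g B v then 1 else 0))"
  proof (intro sum.cong[OF refl])
    fix u v
    have "(\<Sum>w\<in>B. (if g B u = w then x u else 0) * (if g B v = w then x v else 0))
        = (\<Sum>w\<in>B. if g B u = w then (if g B v = g B u then x u * x v else 0) else 0)"
      by (rule sum.cong[OF refl]) auto
    also have "\<dots> = (if g B v = g B u then x u * x v else 0)" using fB g_ex(1)[OF B, of u] by simp
    finally show "(\<Sum>w\<in>B. (if g B u = w then x u else 0) * (if g B v = w then x v else 0))
        = x u * x v * (if g B u = g B v then 1 else 0)" by auto
  qed
  finally have 1: "(\<Sum>w\<in>B. (\<Sum>u\<in>V. if g B u = w then x u else 0)^2)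
      = (\<Sum>u\<in>V. \<Sum>v\<in>V. x u * x v * (if g B u = g B v then 1 else 0))" .
  have "(\<Sum>u\<in>V. \<Sum>v\<in>V. x u * x v * (if g B u \<noteq> g B v then 1 else 0))
      = (\<Sum>u\<in>V. \<Sum>v\<in>V. x u * x v - x u * x v * (if g B u = g B v then 1 else 0))"
    by (intro sum.cong[OF refl]) auto
  also have "\<dots> = (\<Sum>u\<in>V. \<Sum>v\<in>V. x u * x v) - (\<Sum>u\<in>V. \<Sum>v\<in>V. x u * x v * (if g B u = g B v then 1 else 0))"
    by (simp add: sum_subtractf)
  also have "(\<Sum>u\<in>V. \<Sum>v\<in>V. x u * x v) = (\<Sum>v\<in>V. x v) * (\<Sum>v\<in>V. x v)"
    by (simp add: sum_product)
  finally show ?thesis using 1 s0 by simp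
qed

lemma uniq: fixes x :: "'a \<Rightarrow> real" assumes h: "\<forall>u\<in>V. (\<Sum>v\<in>V. real (d u v) * x v) = 0" shows "\<forall>v\<in>V. x v = 0"
proof -
  have "(\<Sum>v\<in>V. x v) * lambda_G V E = (\<Sum>v\<in>V. x v * lambda_G V E)" by (rule sum_distrib_right)
  also have "\<dots> = (\<Sum>v\<in>V. x v * (\<Sum>u\<in>V. real (d v u) * beta V E u))"
    by (rule sum.cong[OF refl]) (simp only: exist_id)
  also have "\<dots> = (\<Sum>v\<in>V. \<Sum>u\<in>V. x v * (real (d v u) * beta V E u))"
    by (rule sum.cong[OF refl]) (rule sum_distrib_left)
  also have "\<dots> = (\<Sum>u\<in>V. \<Sum>v\<in>V. x v * (real (d v u) * beta V E u))" by (rule sum.swap)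
  also have "\<dots> = (\<Sum>u\<in>V. beta V E u * (\<Sum>v\<in>V. real (d u v) * x v))"
  proof (rule sum.cong[OF refl])
    fix u assume u: "u \<in> V"
    have "(\<Sum>v\<in>V. x v * (real (d v u) * beta V E u)) = (\<Sum>v\<in>V. beta V E u * (real (d u v) * x v))"
    proof (rule sum.cong[OF refl])
      fix v assume v: "v \<in> V"
      have "d v u = d u v" by (rule d_sym[OF v u])
      then show "x v * (real (d v u) * beta V E u) = beta V E u * (real (d u v) * x v)" by simp
    qed
    also have "\<dots> = beta V E u * (\<Sum>v\<in>V. real (d u v) * x v)" by (rule sum_distrib_left[symmetric])
    finally show "(\<Sum>v\<in>V. x v * (real (d v u) * beta V E u)) = beta V E u * (\<Sum>v\<in>V. real (d u v) * x v)" .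
  qed
  also have "\<dots> = 0" by (rule sum.neutral) (use h in simp)
  finally have s00: "(\<Sum>v\<in>V. x v) * lambda_G V E = 0" .
  then have s0: "(\<Sum>v\<in>V. x v) = 0" using lambda_pos by simp
  define y where "y B w = (\<Sum>u\<in>V. if g B u = w then x u else 0)" for B w
  have "(\<Sum>u\<in>V. x u * (\<Sum>v\<in>V. real (d u v) * x v)) = 0" by (rule sum.neutral) (use h in simp)
  then have "0 = (\<Sum>u\<in>V. x u * (\<Sum>v\<in>V. real (d u v) * x v))" by simp
  also have "\<dots> = (\<Sum>u\<in>V. \<Sum>v\<in>V. \<Sum>B\<in>blocks V E. x u * x v * (if g B u \<noteq> g B v then 1 else 0))"
  proof (rule sum.cong[OF refl])
    fix u assume u: "u \<in> V"
    have "x u * (\<Sum>v\<in>V. real (d u v) * x v) = (\<Sum>v\<in>V. x u * (real (d u v) * x v))" by (rule sum_distrib_left)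
    also have "\<dots> = (\<Sum>v\<in>V. \<Sum>B\<in>blocks V E. x u * x v * (if g B u \<noteq> g B v then 1 else 0))"
    proof (rule sum.cong[OF refl])
      fix v assume v: "v \<in> V"
      have "x u * (real (d u v) * x v) = (x u * x v) * real (d u v)" by (simp add: mult_ac)
      also have "\<dots> = (x u * x v) * (\<Sum>B\<in>blocks V E. if g B u \<noteq> g B v then 1 else 0)"
        by (simp only: F1r[OF u v])
      also have "\<dots> = (\<Sum>B\<in>blocks V E. x u * x v * (if g B u \<noteq> g B v then 1 else 0))"
        by (rule sum_distrib_left)
      finally show "x u * (real (d u v) * x v) = (\<Sum>B\<in>blocks V E. x u * x v * (if g B u \<noteq> g B v then 1 else 0))" .
    qed
    finally show "x u * (\<Sum>v\<in>V. real (d u v) * x v) = (\<Sum>v\<in>V. \<Sum>B\<in>blocks V E. x u * x v * (if g B u \<noteq> g B v then 1 else 0))" .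
  qed
  also have "\<dots> = (\<Sum>u\<in>V. \<Sum>B\<in>blocks V E. \<Sum>v\<in>V. x u * x v * (if g B u \<noteq> g B v then 1 else 0))"
    by (rule sum.cong[OF refl]) (rule sum.swap)
  also have "\<dots> = (\<Sum>B\<in>blocks V E. \<Sum>u\<in>V. \<Sum>v\<in>V. x u * x v * (if g B u \<noteq> g B v then 1 else 0))"
    by (rule sum.swap)
  also have "\<dots> = (\<Sum>B\<in>blocks V E. - (\<Sum>w\<in>B. (y B w)^2))"
  proof (rule sum.cong[OF refl])
    fix B assume B: "B \<in> blocks V E"
    show "(\<Sum>u\<in>V. \<Sum>v\<in>V. x u * x v * (if g B u \<noteq> g B v then 1 else 0)) = - (\<Sum>w\<in>B. (y B w)^2)"
      unfolding y_def by (rule blkq[OF B s0])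
  qed
  also have "\<dots> = - (\<Sum>B\<in>blocks V E. \<Sum>w\<in>B. (y B w)^2)" by (rule sum_negf)
  finally have z: "(\<Sum>B\<in>blocks V E. \<Sum>w\<in>B. (y B w)^2) = 0" by simp
  have nn: "\<And>B. B \<in> blocks V E \<Longrightarrow> 0 \<le> (\<Sum>w\<in>B. (y B w)^2)" by (rule sum_nonneg) simp
  have A: "\<forall>B\<in>blocks V E. (\<Sum>w\<in>B. (y B w)^2) = 0"
    using sum_nonneg_eq_0_iff[OF blocks_finite, of "\<lambda>B. \<Sum>w\<in>B. (y B w)^2", OF nn] z by blast
  have y0: "y B w = 0" if B: "B \<in> blocks V E" and w: "w \<in> B" for B w
  proof -
    have "(\<Sum>w\<in>B. (y B w)^2) = 0" using A B by blast
    then have "\<forall>w\<in>B. (y B w)^2 = 0" using sum_nonneg_eq_0_iff[OF blk_fin[OF B], of "\<lambda>w. (y B w)^2"] by simp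
    then show ?thesis using w by simp
  qed
  show ?thesis
  proof
    fix v assume v: "v \<in> V"
    have "(\<Sum>u\<in>V. x u * (if u = v then 1 else 0)) = (\<Sum>u\<in>V. if v = u then x u else 0)"
      by (rule sum.cong[OF refl]) auto
    also have "\<dots> = x v" using finV v by simp
    finally have xv: "x v = (\<Sum>u\<in>V. x u * (if u = v then 1 else 0))" by simp
    have "(\<Sum>u\<in>V. x u * (if u = v then 1 else 0))
        = (\<Sum>u\<in>V. x u * (1 - (\<Sum>B\<in>blocks V E. if v \<in> B \<and> g B u \<noteq> v then 1 else 0)))"
    proof (rule sum.cong[OF refl])
      fix u assume u: "u \<in> V"
      show "x u * (if u = v then 1 else 0) = x u * (1 - (\<Sum>B\<in>blocks V E. if v \<in> B \<and> g B u \<noteq> v then 1 else 0))"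
        unfolding F3_sum[OF u v] by simp
    qed
    also have "\<dots> = (\<Sum>u\<in>V. x u - (\<Sum>B\<in>blocks V E. if v \<in> B \<and> g B u \<noteq> v then x u else 0))"
    proof (rule sum.cong[OF refl])
      fix u assume u: "u \<in> V"
      have "x u * (\<Sum>B\<in>blocks V E. if v \<in> B \<and> g B u \<noteq> v then 1 else 0)
          = (\<Sum>B\<in>blocks V E. x u * (if v \<in> B \<and> g B u \<noteq> v then 1 else 0))" by (rule sum_distrib_left)
      also have "\<dots> = (\<Sum>B\<in>blocks V E. if v \<in> B \<and> g B u \<noteq> v then x u else 0)"
        by (rule sum.cong[OF refl]) simp
      finally show "x u * (1 - (\<Sum>B\<in>blocks V E. if v \<in> B \<and> g B u \<noteq> v then 1 else 0))
          = x u - (\<Sum>B\<in>blocks V E. if v \<in> B \<and> g B u \<noteq> v then x u else 0)"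
        by (simp add: right_diff_distrib)
    qed
    also have "\<dots> = (\<Sum>u\<in>V. x u) - (\<Sum>u\<in>V. \<Sum>B\<in>blocks V E. if v \<in> B \<and> g B u \<noteq> v then x u else 0)"
      by (rule sum_subtractf)
    also have "(\<Sum>u\<in>V. \<Sum>B\<in>blocks V E. if v \<in> B \<and> g B u \<noteq> v then x u else 0)
        = (\<Sum>B\<in>blocks V E. \<Sum>u\<in>V. if v \<in> B \<and> g B u \<noteq> v then x u else 0)" by (rule sum.swap)
    also have "\<dots> = 0"
    proof (rule sum.neutral, rule ballI)
      fix B assume B: "B \<in> blocks V E"
      show "(\<Sum>u\<in>V. if v \<in> B \<and> g B u \<noteq> v then x u else 0) = 0"
      proof (cases "v \<in> B")
        case True
        have "(\<Sum>u\<in>V. if v \<in> B \<and> g B u \<noteq> v then x u else 0) = (\<Sum>u\<in>V. x u - (if g B u = v then x u else 0))"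
          using True by (intro sum.cong[OF refl]) auto
        also have "\<dots> = (\<Sum>u\<in>V. x u) - y B v" unfolding y_def by (rule sum_subtractf)
        also have "\<dots> = 0" using s0 y0[OF B True] by simp
        finally show ?thesis .
      qed simp
    qed
    finally show "x v = 0" using s0 xv by simp
  qed
qed

end

theorem mainTheorem1:
  fixes V :: "'a set" and E :: "'a \<Rightarrow> 'a \<Rightarrow> bool"
  assumes "block_graph V E"
    and "card V \<ge> 2"
  shows "(\<exists>!K. K \<in> extensional V \<and> curv_eq V E K)
    \<and> (\<forall>x\<in>V. steinerberger_curvature V E x = real (card V) * beta V E x / lambda_G V E)"
proof -
  interpret BG V E by (rule BG.intro) (use assms in auto)
  define K0 where "K0 = restrict (\<lambda>v. real (card V) * beta V E v / lambda_G V E) V"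
  have lp: "lambda_G V E > 0" by (rule lambda_pos)
  have ex: "K0 \<in> extensional V \<and> curv_eq V E K0"
  proof
    show "K0 \<in> extensional V" unfolding K0_def by simp
    show "curv_eq V E K0" unfolding curv_eq_def
    proof
      fix u assume u: "u \<in> V"
      have "(\<Sum>v\<in>V. dmat E u v * K0 v) = (\<Sum>v\<in>V. (real (card V) / lambda_G V E) * (real (d u v) * beta V E v))"
        unfolding K0_def dmat_def by (intro sum.cong[OF refl]) auto
      also have "\<dots> = (real (card V) / lambda_G V E) * lambda_G V E"
        by (simp only: sum_distrib_left[symmetric] exist_id[OF u])
      also have "\<dots> = real (card V)" using lp by simp
      finally show "(\<Sum>v\<in>V. dmat E u v * K0 v) = real (card V)" .
    qed
  qed
  have un: "K = K0" if K: "K \<in> extensional V \<and> curv_eq V E K" for K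
  proof -
    have "\<forall>u\<in>V. (\<Sum>v\<in>V. real (d u v) * (K v - K0 v)) = 0"
    proof
      fix u assume u: "u \<in> V"
      have "(\<Sum>v\<in>V. real (d u v) * (K v - K0 v)) = (\<Sum>v\<in>V. dmat E u v * K v) - (\<Sum>v\<in>V. dmat E u v * K0 v)"
        unfolding dmat_def by (simp add: algebra_simps sum_subtractf)
      also have "\<dots> = 0" using K ex u unfolding curv_eq_def by simp
      finally show "(\<Sum>v\<in>V. real (d u v) * (K v - K0 v)) = 0" .
    qed
    from uniq[OF this] have "\<forall>v\<in>V. K v = K0 v" by simp
    then show ?thesis using K ex by (intro extensionalityI[of _ V]) auto
  qed
  have eu: "\<exists>!K. K \<in> extensional V \<and> curv_eq V E K" using ex un by blast
  have "(\<exists>!K. K \<in> curv_solutions V E)" using eu unfolding curv_solutions_def by simp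
  then have "steinerberger_curvature V E = (THE K. K \<in> curv_solutions V E)"
    unfolding steinerberger_curvature_def by simp
  also have "\<dots> = K0"
  proof (rule the_equality)
    show "K0 \<in> curv_solutions V E" using ex unfolding curv_solutions_def by simp
    fix K assume "K \<in> curv_solutions V E"
    then show "K = K0" using un unfolding curv_solutions_def by blast
  qed
  finally have sc: "steinerberger_curvature V E = K0" .
  show ?thesis using eu sc unfolding K0_def by simp
qed



end
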